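(* Let $s \geq 0$ be an integer and let $G$ be a bipartite graph with bipartition $A\cup B$, where $A=\{a_1,\dots, a_n\}$ and $B=\{b_1,\dots,b_n\}$, such that: (P1) for all $i,j\in \{1,\dots,n\}$ with $i<j$, $|N_G(a_i)\cap \{b_{i+1},\dots, b_{j}\}| \geq \frac{j-i-s}{2}$; (P2) for all $i,j\in \{1,\dots,n\}$ with $i<j$, $|N_G(b_j)\cap \{a_{i},\dots, a_{j-1}\}| \geq \frac{j-i-s}{2}$. Then $G$ contains a matching of size at least $n-s-1$.
   Context: $N_G(x)$ denotes the set of neighbours of $x$ in the (undirected) graph $G$. *)

theory Defs
  imports Complex_Main
begin

text \<open>Undirected graphs are given by a symmetric irreflexive edge relation E on a vertex type.\<close>

definition nbhd :: "('v \<Rightarrow> 'v \<Rightarrow> bool) \<Rightarrow> 'v \<Rightarrow> 'v set" where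
  "nbhd E x = {y. E x y}"

definition is_matching :: "('v \<Rightarrow> 'v \<Rightarrow> bool) \<Rightarrow> 'v set set \<Rightarrow> bool" where
  "is_matching E M \<longleftrightarrow> finite M \<and> M \<subseteq> {{u, v} | u v. E u v} \<and>
     (\<forall>e\<in>M. \<forall>f\<in>M. e \<noteq> f \<longrightarrow> e \<inter> f = {})"

end

theory Submission imports Defs begin

lemma hall:
  assumes "finite I" "\<forall>x\<in>I. finite (S x)" "\<forall>X\<subseteq>I. card X \<le> card (\<Union>(S ` X))"
  shows "\<exists>f. inj_on f I \<and> (\<forall>x\<in>I. f x \<in> S x)"
  using assms
proof (induction "card I" arbitrary: I S rule: less_induct)
  case less
  have finU: "\<And>X. X \<subseteq> I \<Longrightarrow> finite (\<Union>(S ` X))"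
    using less.prems(1,2) by (meson finite_UN_I finite_subset subsetD)
  show ?case
  proof (cases "I = {}")
    case True then show ?thesis by auto
  next
    case ne: False
    show ?thesis
    proof (cases "\<forall>X. X \<subseteq> I \<and> X \<noteq> {} \<and> X \<noteq> I \<longrightarrow> card X < card (\<Union>(S ` X))")
      case True
      obtain x where x: "x \<in> I" using ne by auto
      have "card {x} \<le> card (S x)" using less.prems(3) x by (metis image_empty image_insert cSup_singleton empty_subsetI insert_subset)
      then have "S x \<noteq> {}" by auto
      then obtain y where y: "y \<in> S x" by auto
      define I' where "I' = I - {x}"
      define S' where "S' = (\<lambda>z. S z - {y})"
      have cI': "card I' < card I" unfolding I'_def using x less.prems(1) by (metis card_Diff1_less)
      have "\<exists>f. inj_on f I' \<and> (\<forall>z\<in>I'. f z \<in> S' z)"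
      proof (rule less.hyps[OF cI'])
        show "finite I'" using less.prems(1) I'_def by auto
        show "\<forall>z\<in>I'. finite (S' z)" using less.prems(2) I'_def S'_def by auto
        show "\<forall>X\<subseteq>I'. card X \<le> card (\<Union>(S' ` X))"
        proof (intro allI impI)
          fix X assume X: "X \<subseteq> I'"
          show "card X \<le> card (\<Union>(S' ` X))"
          proof (cases "X = {}")
            case True then show ?thesis by simp
          next
            case False
            have XI: "X \<subseteq> I" "X \<noteq> I" using X x I'_def by auto
            then have lt: "card X < card (\<Union>(S ` X))" using True False by blast
            have eq: "\<Union>(S' ` X) = \<Union>(S ` X) - {y}" unfolding S'_def by auto
            have "card (\<Union>(S ` X)) - 1 \<le> card (\<Union>(S ` X) - {y})"
              using diff_card_le_card_Diff[OF finite.emptyI[THEN finite.insertI, of y], of "\<Union>(S ` X)"] by (simp add: card_Diff_singleton_if)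
            moreover have "card X \<le> card (\<Union>(S ` X)) - 1" using lt by linarith
            ultimately show ?thesis unfolding eq by (rule le_trans[rotated])
          qed
        qed
      qed
      then obtain f where f: "inj_on f I'" "\<forall>z\<in>I'. f z \<in> S' z" by blast
      define g where "g = f(x := y)"
      have "inj_on g I"
      proof -
        have I: "I = insert x I'" using x I'_def by auto
        have "inj_on g I'" using f(1) unfolding g_def I'_def by (simp add: inj_on_def)
        moreover have "g x \<notin> g ` I'" using f(2) unfolding g_def S'_def I'_def by auto
        moreover have "x \<notin> I'" by (simp add: I'_def)
        ultimately show ?thesis unfolding I by (simp add: inj_on_insert)
      qed
      moreover have "\<forall>z\<in>I. g z \<in> S z" using f(2) y unfolding g_def S'_def I'_def by auto
      ultimately show ?thesis by blast
    next
      case False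
      then obtain X where X: "X \<subseteq> I" "X \<noteq> {}" "X \<noteq> I" "card (\<Union>(S ` X)) \<le> card X"
        using not_less by blast
      define U where "U = \<Union>(S ` X)"
      have cX: "card X < card I" using X less.prems(1) by (meson psubsetI psubset_card_mono)
      have "\<exists>f. inj_on f X \<and> (\<forall>z\<in>X. f z \<in> S z)"
      proof (rule less.hyps[OF cX])
        show "finite X" using X less.prems(1) finite_subset by auto
        show "\<forall>z\<in>X. finite (S z)" using X less.prems(2) by auto
        show "\<forall>Z\<subseteq>X. card Z \<le> card (\<Union>(S ` Z))" using X less.prems(3) by auto
      qed
      then obtain f1 where f1: "inj_on f1 X" "\<forall>z\<in>X. f1 z \<in> S z" by blast
      define S2 where "S2 = (\<lambda>z. S z - U)"
      have cIX: "card (I - X) < card I"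
      proof -
        have "finite X" using X less.prems(1) finite_subset by auto
        then have "card X > 0" using X(2) by auto
        moreover have "card (I - X) = card I - card X" using X(1) \<open>finite X\<close> by (simp add: card_Diff_subset)
        moreover have "card X \<le> card I" using X(1) less.prems(1) card_mono by auto
        ultimately show ?thesis by linarith
      qed
      have "\<exists>f. inj_on f (I - X) \<and> (\<forall>z\<in>I - X. f z \<in> S2 z)"
      proof (rule less.hyps[OF cIX])
        show "finite (I - X)" using less.prems(1) by auto
        show "\<forall>z\<in>I - X. finite (S2 z)" using less.prems(2) S2_def by auto
        show "\<forall>Z\<subseteq>I - X. card Z \<le> card (\<Union>(S2 ` Z))"
        proof (intro allI impI)
          fix Z assume Z: "Z \<subseteq> I - X"
          have ZX: "Z \<union> X \<subseteq> I" using Z X by auto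
          have fZ: "finite Z" "finite X" using ZX less.prems(1) finite_subset by auto
          have "card (Z \<union> X) = card Z + card X" using Z fZ by (subst card_Un_disjoint) auto
          moreover have "card (Z \<union> X) \<le> card (\<Union>(S ` (Z \<union> X)))" using less.prems(3) ZX by blast
          moreover have eq: "\<Union>(S2 ` Z) = \<Union>(S ` (Z \<union> X)) - U" unfolding S2_def U_def by auto
          moreover have cd: "card (\<Union>(S ` (Z \<union> X)) - U) = card (\<Union>(S ` (Z \<union> X))) - card U"
            using finU[OF ZX] by (subst card_Diff_subset) (auto simp: U_def intro: finite_subset)
          moreover have "card (\<Union>(S2 ` Z)) = card (\<Union>(S ` (Z \<union> X))) - card U" using eq cd by simp
          moreover have "card U \<le> card X" using X(4) U_def by simp
          ultimately show "card Z \<le> card (\<Union>(S2 ` Z))" by linarith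
        qed
      qed
      then obtain f2 where f2: "inj_on f2 (I - X)" "\<forall>z\<in>I - X. f2 z \<in> S2 z" by blast
      define g where "g = (\<lambda>z. if z \<in> X then f1 z else f2 z)"
      have "inj_on g I"
        unfolding inj_on_def
      proof (intro ballI impI)
        fix u v assume uv: "u \<in> I" "v \<in> I" "g u = g v"
        show "u = v"
        proof (cases "u \<in> X"; cases "v \<in> X")
          assume "u \<in> X" "v \<in> X" then show ?thesis using uv f1(1) g_def by (auto simp: inj_on_def)
        next
          assume "u \<notin> X" "v \<notin> X" then show ?thesis using uv f2(1) g_def by (auto simp: inj_on_def)
        next
          assume "u \<in> X" "v \<notin> X" then show ?thesis using uv f1(2) f2(2) g_def S2_def U_def by fastforce
        next
          assume "u \<notin> X" "v \<in> X" then show ?thesis using uv f1(2) f2(2) g_def S2_def U_def by fastforce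
        qed
      qed
      moreover have "\<forall>z\<in>I. g z \<in> S z" using f1(2) f2(2) g_def S2_def by auto
      ultimately show ?thesis by blast
    qed
  qed
qed


lemma hall_def:
  assumes "finite I" "\<forall>x\<in>I. finite (S x)" "\<forall>X\<subseteq>I. card X \<le> card (\<Union>(S ` X)) + d"
  shows "\<exists>J g. J \<subseteq> I \<and> card I \<le> card J + d \<and> inj_on g J \<and> (\<forall>x\<in>J. g x \<in> S x)"
proof -
  define S' :: "_ \<Rightarrow> (_ + nat) set" where "S' = (\<lambda>x. Inl ` S x \<union> Inr ` {..<d})"
  have "\<exists>f. inj_on f I \<and> (\<forall>x\<in>I. f x \<in> S' x)"
  proof (rule hall)
    show "finite I" by fact
    show "\<forall>x\<in>I. finite (S' x)" using assms(2) S'_def by auto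
    show "\<forall>X\<subseteq>I. card X \<le> card (\<Union>(S' ` X))"
    proof (intro allI impI)
      fix X assume X: "X \<subseteq> I"
      show "card X \<le> card (\<Union>(S' ` X))"
      proof (cases "X = {}")
        case True then show ?thesis by simp
      next
        case False
        have fU: "finite (\<Union>(S ` X))" using X assms(1,2)
          by (meson finite_UN_I finite_subset subsetD)
        have eq: "\<Union>(S' ` X) = Inl ` (\<Union>(S ` X)) \<union> Inr ` {..<d}" using False unfolding S'_def by auto
        have "card (\<Union>(S' ` X)) = card (\<Union>(S ` X)) + d"
          unfolding eq using fU by (subst card_Un_disjoint) (auto simp: card_image)
        then show ?thesis using assms(3) X by simp
      qed
    qed
  qed
  then obtain f where f: "inj_on f I" "\<forall>x\<in>I. f x \<in> S' x" by blast
  define J where "J = {x\<in>I. isl (f x)}"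
  define g where "g = (\<lambda>x. projl (f x))"
  have fJ: "\<And>x. x \<in> J \<Longrightarrow> f x = Inl (g x)" unfolding J_def g_def by (cases rule: sum.exhaust) auto
  have "inj_on g J" using f(1) fJ unfolding inj_on_def J_def by (metis (no_types, lifting) mem_Collect_eq)
  moreover have "\<forall>x\<in>J. g x \<in> S x"
  proof
    fix x assume x: "x \<in> J"
    have "f x \<in> S' x" using f(2) x J_def by auto
    then show "g x \<in> S x" using fJ[OF x] S'_def by auto
  qed
  moreover have "card I \<le> card J + d"
  proof -
    have sub: "f ` (I - J) \<subseteq> Inr ` {..<d}"
    proof
      fix y assume "y \<in> f ` (I - J)"
      then obtain x where x: "x \<in> I" "x \<notin> J" "y = f x" by auto
      then have "\<not> isl y" using J_def by auto
      moreover have "y \<in> S' x" using f(2) x by auto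
      ultimately show "y \<in> Inr ` {..<d}" unfolding S'_def by auto
    qed
    have "card (I - J) = card (f ` (I - J))" using f(1) by (simp add: card_image inj_on_diff)
    also have "\<dots> \<le> d" using card_mono[OF _ sub] by (simp add: card_image)
    finally have "card (I - J) \<le> d" .
    moreover have "card I = card J + card (I - J)"
      using assms(1) J_def by (metis (no_types, lifting) card_Diff_subset card_mono diff_add_inverse2 finite_subset le_add_diff_inverse mem_Collect_eq subsetI add.commute)
    ultimately show ?thesis by linarith
  qed
  moreover have "J \<subseteq> I" using J_def by auto
  ultimately show ?thesis by blast
qed


lemma count_lemma:
  fixes X Y :: "nat set" and n s :: nat
  assumes XS: "X \<subseteq> {1..n}" and YS: "Y \<subseteq> {1..n}"
    and hX: "\<forall>i\<in>X. \<forall>j. i < j \<longrightarrow> j \<le> n \<longrightarrow> 2 * card (Y \<inter> {i+1..j}) \<le> j - i + s"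
    and hY: "\<forall>j\<in>Y. \<forall>i. 1 \<le> i \<longrightarrow> i < j \<longrightarrow> 2 * card (X \<inter> {i..j-1}) \<le> j - i + s"
  shows "card X + card Y \<le> n + s + 1"
proof -
  have fX: "finite X" and fY: "finite Y" using XS YS finite_subset by auto
  have cX: "card X \<le> n" using card_mono[OF _ XS] by simp
  have cY: "card Y \<le> n" using card_mono[OF _ YS] by simp
  show ?thesis
  proof (cases "X = {} \<or> Y = {}")
    case True then show ?thesis using cX cY by auto
  next
    case False
    define i0 where "i0 = Min X"
    define j0 where "j0 = Max Y"
    have i0X: "i0 \<in> X" using False fX i0_def by auto
    have j0Y: "j0 \<in> Y" using False fY j0_def by auto
    have i0le: "\<forall>x\<in>X. i0 \<le> x" using fX i0_def by auto
    have j0ge: "\<forall>y\<in>Y. y \<le> j0" using fY j0_def by auto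
    have i0r: "1 \<le> i0" "i0 \<le> n" using i0X XS by auto
    have j0r: "1 \<le> j0" "j0 \<le> n" using j0Y YS by auto
    show ?thesis
    proof (cases "i0 < j0")
      case True
      have c1: "2 * card (Y \<inter> {i0+1..j0}) \<le> j0 - i0 + s" using hX i0X True j0r by blast
      have c2: "2 * card (X \<inter> {i0..j0-1}) \<le> j0 - i0 + s" using hY j0Y True i0r by blast
      have "X \<subseteq> (X \<inter> {i0..j0-1}) \<union> {j0..n}" using XS i0le by auto
      then have "card X \<le> card ((X \<inter> {i0..j0-1}) \<union> {j0..n})" by (intro card_mono) auto
      also have "\<dots> \<le> card (X \<inter> {i0..j0-1}) + card {j0..n}" by (rule card_Un_le)
      finally have a1: "card X \<le> card (X \<inter> {i0..j0-1}) + (n + 1 - j0)" by simp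
      have "Y \<subseteq> {1..i0} \<union> (Y \<inter> {i0+1..j0})" using YS j0ge by auto
      then have "card Y \<le> card ({1..i0} \<union> (Y \<inter> {i0+1..j0}))" by (intro card_mono) auto
      also have "\<dots> \<le> card {1..i0} + card (Y \<inter> {i0+1..j0})" by (rule card_Un_le)
      finally have a2: "card Y \<le> i0 + card (Y \<inter> {i0+1..j0})" by simp
      show ?thesis using a1 a2 c1 c2 True j0r by linarith
    next
      case False
      have "X \<subseteq> {i0..n}" using XS i0le by auto
      then have a1: "card X \<le> n + 1 - i0" using card_mono[of "{i0..n}" X] by simp
      have "Y \<subseteq> {1..j0}" using YS j0ge by auto
      then have a2: "card Y \<le> j0" using card_mono[of "{1..j0}" Y] by simp
      show ?thesis using a1 a2 False i0r by linarith
    qed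
  qed
qed


theorem claim3p2:
  fixes E :: "'v \<Rightarrow> 'v \<Rightarrow> bool" and a b :: "nat \<Rightarrow> 'v" and n s :: nat
  assumes sym: "\<forall>u v. E u v \<longrightarrow> E v u"
    and irrefl: "\<forall>u. \<not> E u u"
    and inj_a: "inj_on a {1..n}" and inj_b: "inj_on b {1..n}"
    and disj: "a ` {1..n} \<inter> b ` {1..n} = {}"
    and bip: "\<forall>u v. E u v \<longrightarrow>
                (u \<in> a ` {1..n} \<and> v \<in> b ` {1..n}) \<or> (u \<in> b ` {1..n} \<and> v \<in> a ` {1..n})"
    and P1: "\<forall>i j. 1 \<le> i \<longrightarrow> i < j \<longrightarrow> j \<le> n \<longrightarrow>
               real (card (nbhd E (a i) \<inter> b ` {i+1..j})) \<ge> (real j - real i - real s) / 2"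
    and P2: "\<forall>i j. 1 \<le> i \<longrightarrow> i < j \<longrightarrow> j \<le> n \<longrightarrow>
               real (card (nbhd E (b j) \<inter> a ` {i..j-1})) \<ge> (real j - real i - real s) / 2"
  shows "\<exists>M. is_matching E M \<and> int (card M) \<ge> int n - int s - 1"
proof -
  define S where "S = (\<lambda>i. {j\<in>{1..n}. E (a i) (b j)})"
  have hc: "\<forall>X\<subseteq>{1..n}. card X \<le> card (\<Union>(S ` X)) + (s + 1)"
  proof (intro allI impI)
    fix X assume XS: "X \<subseteq> {1..n}"
    define N where "N = \<Union>(S ` X)"
    define Y where "Y = {1..n} - N"
    have NS: "N \<subseteq> {1..n}" unfolding N_def S_def by auto
    have hX: "\<forall>i\<in>X. \<forall>j. i < j \<longrightarrow> j \<le> n \<longrightarrow> 2 * card (Y \<inter> {i+1..j}) \<le> j - i + s"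
    proof (intro ballI allI impI)
      fix i j assume i: "i \<in> X" and ij: "i < j" "j \<le> n"
      have i1: "1 \<le> i" using i XS by auto
      have sub: "nbhd E (a i) \<inter> b ` {i+1..j} \<subseteq> b ` ({i+1..j} - Y)"
      proof
        fix y assume y: "y \<in> nbhd E (a i) \<inter> b ` {i+1..j}"
        then obtain k where k: "k \<in> {i+1..j}" "y = b k" by auto
        have "E (a i) (b k)" using y k by (auto simp: nbhd_def)
        moreover have "k \<in> {1..n}" using k i1 ij by auto
        ultimately have "k \<in> N" unfolding N_def S_def using i by auto
        then show "y \<in> b ` ({i+1..j} - Y)" using k Y_def by auto
      qed
      have "card (nbhd E (a i) \<inter> b ` {i+1..j}) \<le> card (b ` ({i+1..j} - Y))"
        by (rule card_mono[OF _ sub]) simp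
      also have "\<dots> \<le> card ({i+1..j} - Y)" by (rule card_image_le) simp
      finally have c1: "card (nbhd E (a i) \<inter> b ` {i+1..j}) \<le> card ({i+1..j} - Y)" .
      have c2: "card ({i+1..j} - Y) + card (Y \<inter> {i+1..j}) = j - i"
        using card_Diff_subset_Int[of "{i+1..j}" Y] card_mono[of "{i+1..j}" "{i+1..j} \<inter> Y"]
        by (simp add: Int_commute)
      have p: "real (card (nbhd E (a i) \<inter> b ` {i+1..j})) \<ge> (real j - real i - real s) / 2"
        using P1 i1 ij by blast
      have "real (2 * card (Y \<inter> {i+1..j})) \<le> real (j - i + s)"
        using c1 c2 p ij by (simp add: of_nat_diff)
      then show "2 * card (Y \<inter> {i+1..j}) \<le> j - i + s" by (simp only: of_nat_le_iff)
    qed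
    have hY: "\<forall>j\<in>Y. \<forall>i. 1 \<le> i \<longrightarrow> i < j \<longrightarrow> 2 * card (X \<inter> {i..j-1}) \<le> j - i + s"
    proof (intro ballI allI impI)
      fix j i assume j: "j \<in> Y" and ij: "1 \<le> i" "i < j"
      have jn: "j \<le> n" "j \<notin> N" using j Y_def by auto
      have sub: "nbhd E (b j) \<inter> a ` {i..j-1} \<subseteq> a ` ({i..j-1} - X)"
      proof
        fix y assume y: "y \<in> nbhd E (b j) \<inter> a ` {i..j-1}"
        then obtain k where k: "k \<in> {i..j-1}" "y = a k" by auto
        have "E (a k) (b j)" using y k sym by (auto simp: nbhd_def)
        moreover have "j \<in> {1..n}" using jn ij by auto
        ultimately have "k \<notin> X" using jn unfolding N_def S_def by auto
        then show "y \<in> a ` ({i..j-1} - X)" using k by auto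
      qed
      have "card (nbhd E (b j) \<inter> a ` {i..j-1}) \<le> card (a ` ({i..j-1} - X))"
        by (rule card_mono[OF _ sub]) simp
      also have "\<dots> \<le> card ({i..j-1} - X)" by (rule card_image_le) simp
      finally have c1: "card (nbhd E (b j) \<inter> a ` {i..j-1}) \<le> card ({i..j-1} - X)" .
      have c2: "card ({i..j-1} - X) + card (X \<inter> {i..j-1}) = j - i"
        using card_Diff_subset_Int[of "{i..j-1}" X] card_mono[of "{i..j-1}" "{i..j-1} \<inter> X"] ij
        by (simp add: Int_commute)
      have p: "real (card (nbhd E (b j) \<inter> a ` {i..j-1})) \<ge> (real j - real i - real s) / 2"
        using P2 jn ij by blast
      have "real (2 * card (X \<inter> {i..j-1})) \<le> real (j - i + s)"
        using c1 c2 p ij by (simp add: of_nat_diff)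
      then show "2 * card (X \<inter> {i..j-1}) \<le> j - i + s" by (simp only: of_nat_le_iff)
    qed
    have "card X + card Y \<le> n + s + 1"
      by (rule count_lemma[OF XS _ hX hY]) (auto simp: Y_def)
    moreover have "card Y = n - card N" unfolding Y_def using NS by (simp add: card_Diff_subset finite_subset)
    moreover have "card N \<le> n" using card_mono[OF _ NS] by simp
    ultimately show "card X \<le> card (\<Union>(S ` X)) + (s + 1)" unfolding N_def by linarith
  qed
  have "\<exists>J g. J \<subseteq> {1..n} \<and> card {1..n} \<le> card J + (s + 1) \<and> inj_on g J \<and> (\<forall>x\<in>J. g x \<in> S x)"
    by (rule hall_def) (use hc S_def in auto)
  then obtain J g where J: "J \<subseteq> {1..n}" "card {1..n} \<le> card J + (s + 1)" "inj_on g J"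
    "\<forall>x\<in>J. g x \<in> S x" by blast
  have gS: "\<And>i. i \<in> J \<Longrightarrow> g i \<in> {1..n} \<and> E (a i) (b (g i))" using J(4) S_def by auto
  have ab: "\<And>i k. i \<in> J \<Longrightarrow> k \<in> J \<Longrightarrow> a i \<noteq> b (g k)"
    using disj J(1) gS by blast
  define M where "M = (\<lambda>i. {a i, b (g i)}) ` J"
  have injM: "inj_on (\<lambda>i. {a i, b (g i)}) J"
  proof (rule inj_onI)
    fix i k assume ik: "i \<in> J" "k \<in> J" "{a i, b (g i)} = {a k, b (g k)}"
    then have "a i = a k" using ab by (metis insertE insertI1 singletonD)
    then show "i = k" using inj_a J(1) ik by (auto simp: inj_on_def)
  qed
  have "is_matching E M"
    unfolding is_matching_def
  proof (intro conjI)
    show "finite M" unfolding M_def using J(1) finite_subset by auto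
    show "M \<subseteq> {{u, v} |u v. E u v}" unfolding M_def using gS by blast
    show "\<forall>e\<in>M. \<forall>f\<in>M. e \<noteq> f \<longrightarrow> e \<inter> f = {}"
    proof (intro ballI impI)
      fix e f assume e: "e \<in> M" and f: "f \<in> M" and ne: "e \<noteq> f"
      obtain i where i: "i \<in> J" "e = {a i, b (g i)}" using e M_def by auto
      obtain k where k: "k \<in> J" "f = {a k, b (g k)}" using f M_def by auto
      have "i \<noteq> k" using i k ne by auto
      then have "a i \<noteq> a k" using inj_a J(1) i k by (auto simp: inj_on_def)
      moreover have "b (g i) \<noteq> b (g k)"
        using \<open>i \<noteq> k\<close> J(3) inj_b gS i k by (auto simp: inj_on_def)
      ultimately show "e \<inter> f = {}" using i k ab by auto
    qed
  qed
  moreover have "card M = card J" unfolding M_def using injM by (simp add: card_image)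
  ultimately show ?thesis using J(2) by auto
qed

end
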